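(* Let $G$ be a graph whose twin graph $G^*$ is isomorphic to a triangle with one pendant edge attached (so $G^*$ has two vertices of degree 2, one of degree 3 and one leaf), where one of the degree-2 vertices is of type (N), the other degree-2 vertex is of type (1K), the leaf is of type (1N), and moreover, if the degree-2 vertex of type (1K) is of type (K), then neither the leaf nor the degree-3 vertex is of type (N). Then $D(G)\neq n(G)-2$.
   Context: All graphs are finite and simple; $n(G)=|V(G)|$; $N_G(u)$ is the neighborhood of $u$. A distinguishing coloring of a graph $G$ is a (not necessarily proper) vertex coloring such that the only automorphism of $G$ mapping every vertex to a vertex of the same color is the identity; the distinguishing number $D(G)$ is the minimum number of colors in a distinguishing coloring of $G$. Two distinct vertices $u,v$ are twins if $N_G(u)\setminus\{v\}=N_G(v)\setminus\{u\}$. The relation $u\equiv v$ iff $u=v$ or $u,v$ are twins is an equivalence relation; the class of $v$ is denoted $v^*$. The twin graph $G^*$ has the equivalence classes as vertices, distinct classes $u^*,v^*$ being adjacent iff $uv\in E(G)$. Each class induces a complete or an edgeless graph. A class $v^*$ is of type (1) if $|v^*|=1$, of type (K) if $|v^*|\ge 2$ and it induces a complete graph, and of type (N) if $|v^*|\ge2$ and it induces an edgeless graph; type (1K) means type (1) or (K), type (1N) means (1) or (N), and type (KN) means (K) or (N). *)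

theory Defs
  imports Main
begin

definition graph :: "'a set \<Rightarrow> ('a \<Rightarrow> 'a \<Rightarrow> bool) \<Rightarrow> bool" where
  "graph V E \<longleftrightarrow> finite V \<and> (\<forall>u v. E u v \<longrightarrow> u \<in> V \<and> v \<in> V \<and> u \<noteq> v \<and> E v u)"

definition nbhd :: "'a set \<Rightarrow> ('a \<Rightarrow> 'a \<Rightarrow> bool) \<Rightarrow> 'a \<Rightarrow> 'a set" where
  "nbhd V E u = {v \<in> V. E u v}"

definition automorphism :: "'a set \<Rightarrow> ('a \<Rightarrow> 'a \<Rightarrow> bool) \<Rightarrow> ('a \<Rightarrow> 'a) \<Rightarrow> bool" where
  "automorphism V E f \<longleftrightarrow> bij_betw f V V \<and> (\<forall>u\<in>V. \<forall>v\<in>V. E (f u) (f v) \<longleftrightarrow> E u v)"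

definition distinguishing :: "'a set \<Rightarrow> ('a \<Rightarrow> 'a \<Rightarrow> bool) \<Rightarrow> ('a \<Rightarrow> nat) \<Rightarrow> bool" where
  "distinguishing V E c \<longleftrightarrow>
     (\<forall>f. automorphism V E f \<and> (\<forall>v\<in>V. c (f v) = c v) \<longrightarrow> (\<forall>v\<in>V. f v = v))"

definition dist_num :: "'a set \<Rightarrow> ('a \<Rightarrow> 'a \<Rightarrow> bool) \<Rightarrow> nat" where
  "dist_num V E = (LEAST k. \<exists>c. c ` V \<subseteq> {..<k} \<and> distinguishing V E c)"

definition twins :: "'a set \<Rightarrow> ('a \<Rightarrow> 'a \<Rightarrow> bool) \<Rightarrow> 'a \<Rightarrow> 'a \<Rightarrow> bool" where
  "twins V E u v \<longleftrightarrow> u \<noteq> v \<and> nbhd V E u - {v} = nbhd V E v - {u}"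

definition twin_class :: "'a set \<Rightarrow> ('a \<Rightarrow> 'a \<Rightarrow> bool) \<Rightarrow> 'a \<Rightarrow> 'a set" where
  "twin_class V E v = {u \<in> V. u = v \<or> twins V E u v}"

text \<open>Twin graph G*: vertices are the twin classes, distinct classes adjacent iff
some (equivalently every) pair of representatives is adjacent.\<close>
definition twin_vertices :: "'a set \<Rightarrow> ('a \<Rightarrow> 'a \<Rightarrow> bool) \<Rightarrow> 'a set set" where
  "twin_vertices V E = twin_class V E ` V"

definition twin_adj :: "'a set \<Rightarrow> ('a \<Rightarrow> 'a \<Rightarrow> bool) \<Rightarrow> 'a set \<Rightarrow> 'a set \<Rightarrow> bool" where
  "twin_adj V E X Y \<longleftrightarrow> X \<noteq> Y \<and> (\<exists>u\<in>X. \<exists>v\<in>Y. E u v)"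

definition type_1 :: "'a set \<Rightarrow> bool" where
  "type_1 X \<longleftrightarrow> card X = 1"

definition type_K :: "('a \<Rightarrow> 'a \<Rightarrow> bool) \<Rightarrow> 'a set \<Rightarrow> bool" where
  "type_K E X \<longleftrightarrow> card X \<ge> 2 \<and> (\<forall>u\<in>X. \<forall>v\<in>X. u \<noteq> v \<longrightarrow> E u v)"

definition type_N :: "('a \<Rightarrow> 'a \<Rightarrow> bool) \<Rightarrow> 'a set \<Rightarrow> bool" where
  "type_N E X \<longleftrightarrow> card X \<ge> 2 \<and> (\<forall>u\<in>X. \<forall>v\<in>X. \<not> E u v)"

text \<open>G* is isomorphic to the paw (triangle A B C with pendant edge C L):
A, B the degree-2 vertices, C the degree-3 vertex, L the leaf.\<close>
definition twin_graph_paw :: "'a set \<Rightarrow> ('a \<Rightarrow> 'a \<Rightarrow> bool) \<Rightarrow> 'a set \<Rightarrow> 'a set \<Rightarrow> 'a set \<Rightarrow> 'a set \<Rightarrow> bool" where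
  "twin_graph_paw V E A B C L \<longleftrightarrow>
     twin_vertices V E = {A, B, C, L} \<and>
     A \<noteq> B \<and> A \<noteq> C \<and> A \<noteq> L \<and> B \<noteq> C \<and> B \<noteq> L \<and> C \<noteq> L \<and>
     twin_adj V E A B \<and> twin_adj V E A C \<and> twin_adj V E B C \<and> twin_adj V E C L \<and>
     \<not> twin_adj V E A L \<and> \<not> twin_adj V E B L"

end

theory Submission
  imports Defs
begin

lemma twins_iff:
  assumes g: "graph V E"
  shows "twins V E u v \<longleftrightarrow> u \<noteq> v \<and> (\<forall>z. z \<noteq> u \<and> z \<noteq> v \<longrightarrow> (E u z \<longleftrightarrow> E v z))"
proof -
  have s: "\<And>x y. E x y \<Longrightarrow> E y x \<and> x \<noteq> y \<and> x \<in> V \<and> y \<in> V" using g unfolding graph_def by blast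
  have "nbhd V E u - {v} = nbhd V E v - {u} \<longleftrightarrow> (\<forall>z. z \<noteq> u \<and> z \<noteq> v \<longrightarrow> (E u z \<longleftrightarrow> E v z))"
  proof
    assume h: "nbhd V E u - {v} = nbhd V E v - {u}"
    show "\<forall>z. z \<noteq> u \<and> z \<noteq> v \<longrightarrow> (E u z \<longleftrightarrow> E v z)"
    proof (intro allI impI)
      fix z assume z: "z \<noteq> u \<and> z \<noteq> v"
      have "z \<in> nbhd V E u - {v} \<longleftrightarrow> z \<in> nbhd V E v - {u}" using h by simp
      then show "E u z \<longleftrightarrow> E v z" using z s unfolding nbhd_def by blast
    qed
  next
    assume h: "\<forall>z. z \<noteq> u \<and> z \<noteq> v \<longrightarrow> (E u z \<longleftrightarrow> E v z)"
    show "nbhd V E u - {v} = nbhd V E v - {u}"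
    proof (rule set_eqI)
      fix z
      show "z \<in> nbhd V E u - {v} \<longleftrightarrow> z \<in> nbhd V E v - {u}"
      proof (cases "z = u \<or> z = v")
        case True
        then show ?thesis using s unfolding nbhd_def by blast
      next
        case False
        then show ?thesis using h unfolding nbhd_def by blast
      qed
    qed
  qed
  then show ?thesis unfolding twins_def by blast
qed

lemma twins_trans:
  assumes g: "graph V E" and uv: "twins V E u v" and vw: "twins V E v w" and ne: "u \<noteq> w"
  shows "twins V E u w"
proof -
  have s: "\<And>x y. E x y \<Longrightarrow> E y x" using g unfolding graph_def by blast
  have 1: "\<And>z. z \<noteq> u \<Longrightarrow> z \<noteq> v \<Longrightarrow> (E u z \<longleftrightarrow> E v z)" and uv': "u \<noteq> v"
    using uv twins_iff[OF g] by blast+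
  have 2: "\<And>z. z \<noteq> v \<Longrightarrow> z \<noteq> w \<Longrightarrow> (E v z \<longleftrightarrow> E w z)" and vw': "v \<noteq> w"
    using vw twins_iff[OF g] by blast+
  have "\<And>z. z \<noteq> u \<Longrightarrow> z \<noteq> w \<Longrightarrow> (E u z \<longleftrightarrow> E w z)"
  proof -
    fix z assume a: "z \<noteq> u" "z \<noteq> w"
    show "E u z \<longleftrightarrow> E w z"
    proof (cases "z = v")
      case True
      have x1: "E v u \<longleftrightarrow> E w u" using 2[of u] uv' ne by blast
      have x2: "E u w \<longleftrightarrow> E v w" using 1[of w] vw' ne by blast
      have "E u v \<longleftrightarrow> E w v"
      proof
        assume "E u v" then have "E w u" using x1 s by blast
        then have "E v w" using x2 s by blast
        then show "E w v" using s by blast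
      next
        assume "E w v" then have "E u w" using x2 s by blast
        then have "E v u" using x1 s by blast
        then show "E u v" using s by blast
      qed
      then show ?thesis using True by simp
    next
      case False
      then show ?thesis using 1[of z] 2[of z] a by blast
    qed
  qed
  then show ?thesis using ne twins_iff[OF g] by blast
qed

lemma class_eq:
  assumes g: "graph V E" and u: "u \<in> twin_class V E x"
  shows "twin_class V E u = twin_class V E x"
proof -
  define R where "R a b \<longleftrightarrow> a = b \<or> twins V E a b" for a b
  have sym: "\<And>a b. R a b \<Longrightarrow> R b a" unfolding R_def twins_def by auto
  have tr: "\<And>a b c. R a b \<Longrightarrow> R b c \<Longrightarrow> R a c"
  proof -
    fix a b c assume "R a b" "R b c"
    then show "R a c" unfolding R_def
    proof (elim disjE)
      assume "twins V E a b" "twins V E b c"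
      then show "a = c \<or> twins V E a c" using twins_trans[OF g] by blast
    qed simp_all
  qed
  have cl: "\<And>y. twin_class V E y = {w \<in> V. R w y}" unfolding twin_class_def R_def by simp
  have ux: "R u x" "u \<in> V" using u cl by auto
  show ?thesis unfolding cl using ux sym tr by blast
qed

lemma class_adj:
  assumes g: "graph V E" and X: "X \<in> twin_vertices V E" and Y: "Y \<in> twin_vertices V E"
    and XY: "twin_adj V E X Y" and u: "u \<in> X" and v: "v \<in> Y"
  shows "E u v"
proof -
  have s: "\<And>x y. E x y \<Longrightarrow> E y x \<and> x \<noteq> y \<and> x \<in> V \<and> y \<in> V" using g unfolding graph_def by blast
  obtain x where x: "X = twin_class V E x" using X unfolding twin_vertices_def by auto
  obtain y where y: "Y = twin_class V E y" using Y unfolding twin_vertices_def by auto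
  obtain u' v' where u': "u' \<in> X" and v': "v' \<in> Y" and e: "E u' v'" "X \<noteq> Y"
    using XY unfolding twin_adj_def by auto
  have disj: "\<And>z. z \<in> X \<Longrightarrow> z \<notin> Y"
    using class_eq[OF g] x y e(2) by metis
  have same: "\<And>a a'. a \<in> twin_class V E x \<Longrightarrow> a' \<in> twin_class V E x \<Longrightarrow> a = a' \<or> twins V E a a'"
  proof -
    fix a a' assume a: "a \<in> twin_class V E x" "a' \<in> twin_class V E x"
    have "a' \<in> twin_class V E a" using class_eq[OF g a(1)] a(2) by simp
    then have "a' = a \<or> twins V E a' a" unfolding twin_class_def by simp
    then show "a = a' \<or> twins V E a a'" unfolding twins_def by auto
  qed
  have samey: "\<And>a a'. a \<in> twin_class V E y \<Longrightarrow> a' \<in> twin_class V E y \<Longrightarrow> a = a' \<or> twins V E a a'"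
  proof -
    fix a a' assume a: "a \<in> twin_class V E y" "a' \<in> twin_class V E y"
    have "a' \<in> twin_class V E a" using class_eq[OF g a(1)] a(2) by simp
    then have "a' = a \<or> twins V E a' a" unfolding twin_class_def by simp
    then show "a = a' \<or> twins V E a a'" unfolding twins_def by auto
  qed
  have mv: "\<And>a a' b. a \<in> X \<Longrightarrow> a' \<in> X \<Longrightarrow> b \<in> Y \<Longrightarrow> E a' b \<Longrightarrow> E a b"
  proof -
    fix a a' b assume a: "a \<in> X" "a' \<in> X" "b \<in> Y" "E a' b"
    have "a = a' \<or> twins V E a a'" using same a x by blast
    moreover have "b \<noteq> a" "b \<noteq> a'" using disj a by blast+
    ultimately show "E a b" using a twins_iff[OF g, of a a'] by metis
  qed
  have mv2: "\<And>a b b'. a \<in> X \<Longrightarrow> b \<in> Y \<Longrightarrow> b' \<in> Y \<Longrightarrow> E a b' \<Longrightarrow> E a b"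
  proof -
    fix a b b' assume a: "a \<in> X" "b \<in> Y" "b' \<in> Y" "E a b'"
    have "b = b' \<or> twins V E b b'" using samey a y by blast
    moreover have "b \<noteq> a" "b' \<noteq> a" using disj a by blast+
    moreover have "E b' a" using a s by blast
    ultimately have "E b a" using twins_iff[OF g, of b b'] by metis
    then show "E a b" using s by blast
  qed
  show ?thesis using mv[OF u u' v' e(1)] mv2[OF u v v'] by blast
qed

lemma class_nonempty:
  assumes "X \<in> twin_vertices V E" shows "\<exists>x\<in>V. x \<in> X"
  using assms unfolding twin_vertices_def twin_class_def by auto

lemma class_sub: "X \<in> twin_vertices V E \<Longrightarrow> X \<subseteq> V"
  unfolding twin_vertices_def twin_class_def by auto

theorem lemma4p7:
  fixes V :: "'a set" and E :: "'a \<Rightarrow> 'a \<Rightarrow> bool" and A B C L :: "'a set"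
  assumes "graph V E"
    and "twin_graph_paw V E A B C L"
    and "type_N E A"
    and "type_1 B \<or> type_K E B"
    and "type_1 L \<or> type_N E L"
    and "type_K E B \<longrightarrow> \<not> type_N E L \<and> \<not> type_N E C"
  shows "dist_num V E \<noteq> card V - 2"
proof -
  note g = assms(1)
  have s: "\<And>x y. E x y \<Longrightarrow> E y x \<and> x \<noteq> y \<and> x \<in> V \<and> y \<in> V" using g unfolding graph_def by blast
  have fin: "finite V" using g unfolding graph_def by blast
  have P0: "twin_vertices V E = {A, B, C, L}" using assms(2) unfolding twin_graph_paw_def by (elim conjE)
  have Pd1: "A \<noteq> L" using assms(2) unfolding twin_graph_paw_def by (elim conjE)
  have Pd2: "B \<noteq> L" using assms(2) unfolding twin_graph_paw_def by (elim conjE)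
  have ab: "twin_adj V E A B" using assms(2) unfolding twin_graph_paw_def by (elim conjE)
  have ac: "twin_adj V E A C" using assms(2) unfolding twin_graph_paw_def by (elim conjE)
  have cl: "twin_adj V E C L" using assms(2) unfolding twin_graph_paw_def by (elim conjE)
  have al: "\<not> twin_adj V E A L" using assms(2) unfolding twin_graph_paw_def by (elim conjE)
  have bl: "\<not> twin_adj V E B L" using assms(2) unfolding twin_graph_paw_def by (elim conjE)
  note Pd = Pd1 Pd2
  have inA: "A \<in> twin_vertices V E" and inB: "B \<in> twin_vertices V E"
    and inC: "C \<in> twin_vertices V E" and inL: "L \<in> twin_vertices V E" unfolding P0 by simp_all
  have lc: "twin_adj V E L C" using cl s unfolding twin_adj_def by metis
  have "card A \<ge> 2" using assms(3) unfolding type_N_def by blast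
  then obtain a1 a2 where a: "a1 \<in> A" "a2 \<in> A" "a1 \<noteq> a2"
  proof -
    have "finite A" using \<open>card A \<ge> 2\<close> card.infinite by fastforce
    obtain a1 where "a1 \<in> A" using \<open>card A \<ge> 2\<close> by fastforce
    moreover have "card (A - {a1}) \<ge> 1" using \<open>card A \<ge> 2\<close> \<open>finite A\<close> calculation by simp
    then obtain a2 where "a2 \<in> A - {a1}" by (metis card.empty ex_in_conv not_one_le_zero)
    ultimately show ?thesis using that by blast
  qed
  have nA: "\<not> E a2 a1" using assms(3) a unfolding type_N_def by blast
  obtain b where b: "b \<in> B" using class_nonempty[OF inB] by blast
  obtain c where c: "c \<in> C" using class_nonempty[OF inC] by blast
  obtain l where l: "l \<in> L" using class_nonempty[OF inL] by blast
  have e1: "E a2 b" "E a2 c" "E a1 b" "E a1 c" "E l c"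
    using class_adj[OF g inA inB ab a(2) b] class_adj[OF g inA inC ac a(2) c]
      class_adj[OF g inA inB ab a(1) b] class_adj[OF g inA inC ac a(1) c]
      class_adj[OF g inL inC lc l c] by auto
  have e2: "\<not> E a2 l" "\<not> E a1 l" "\<not> E l b"
  proof -
    show "\<not> E a2 l" using al a(2) l Pd unfolding twin_adj_def by blast
    show "\<not> E a1 l" using al a(1) l Pd unfolding twin_adj_def by blast
    have "\<not> E b l" using bl b l Pd unfolding twin_adj_def by blast
    then show "\<not> E l b" using s by blast
  qed
  have dist: "a1 \<noteq> b" "a1 \<noteq> c" "b \<noteq> c" "c \<noteq> l" "a1 \<noteq> l" "b \<noteq> l" "a2 \<noteq> b" "a2 \<noteq> c" "a2 \<noteq> l"
    "a1 \<noteq> a2"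
  proof -
    show "a1 \<noteq> b" using s[OF e1(3)] by blast
    show "a1 \<noteq> c" using s[OF e1(4)] by blast
    show "c \<noteq> l" using s[OF e1(5)] by blast
    show "a2 \<noteq> b" using s[OF e1(1)] by blast
    show "a2 \<noteq> c" using s[OF e1(2)] by blast
    show "a1 \<noteq> a2" using a by blast
    show "a1 \<noteq> l" using e1(3) e2(3) by blast
    show "b \<noteq> l" using e1(1) e2(1) by blast
    show "a2 \<noteq> l" using e1(1) e2(3) by blast
    have "\<not> E b b" using s by blast
    then show "b \<noteq> c" using e1(5) e2(3) by blast
  qed
  have inV: "a1 \<in> V" "a2 \<in> V" "b \<in> V" "c \<in> V" "l \<in> V"
    using s[OF e1(1)] s[OF e1(4)] s[OF e1(5)] by auto
  define S where "S = {a1, b, c, l}"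
  have SV: "S \<subseteq> V" using inV S_def by auto
  have cS: "card S = 4" using dist unfolding S_def by auto
  have cV: "card V \<ge> 5"
  proof -
    have "insert a2 S \<subseteq> V" using SV inV by auto
    moreover have "card (insert a2 S) = 5" using cS dist S_def fin SV by (simp add: finite_subset)
    ultimately show ?thesis using fin by (metis card_mono)
  qed
  have fD: "finite (V - S)" using fin by auto
  obtain h where h: "bij_betw h (V - S) {0..<card (V - S)}" using ex_bij_betw_finite_nat[OF fD] by blast
  have cD: "card (V - S) = card V - 4" using card_Diff_subset[OF finite_subset[OF SV fin] SV] cS by simp
  define col where "col v = (if v \<in> S then 0 else Suc (h v))" for v
  have range: "col ` V \<subseteq> {..<card V - 3}"
  proof
    fix x assume "x \<in> col ` V"
    then obtain v where v: "v \<in> V" "x = col v" by blast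
    show "x \<in> {..<card V - 3}"
    proof (cases "v \<in> S")
      case True then show ?thesis using v cV col_def by auto
    next
      case False
      hence "h v \<in> {0..<card (V - S)}" using h v bij_betw_apply by fastforce
      then show ?thesis using v False cV cD col_def by auto
    qed
  qed
  have dst: "distinguishing V E col"
    unfolding distinguishing_def
  proof (intro allI impI)
    fix f assume fa: "automorphism V E f \<and> (\<forall>v\<in>V. col (f v) = col v)"
    have bf: "bij_betw f V V" and ad: "\<And>u v. u \<in> V \<Longrightarrow> v \<in> V \<Longrightarrow> E (f u) (f v) \<longleftrightarrow> E u v"
      using fa unfolding automorphism_def by auto
    have inj: "\<And>u v. u \<in> V \<Longrightarrow> v \<in> V \<Longrightarrow> f u = f v \<Longrightarrow> u = v"
      using bf unfolding bij_betw_def inj_on_def by blast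
    have fV: "\<And>v. v \<in> V \<Longrightarrow> f v \<in> V" using bf bij_betw_apply by metis
    have out: "\<And>v. v \<in> V - S \<Longrightarrow> f v = v"
    proof -
      fix v assume v: "v \<in> V - S"
      have "col (f v) = col v" using fa v by blast
      hence "f v \<notin> S" and hh: "h (f v) = h v" using v unfolding col_def by (auto split: if_splits)
      hence "f v \<in> V - S" using fV v by auto
      then show "f v = v" using hh v h unfolding bij_betw_def inj_on_def by blast
    qed
    have inS: "\<And>v. v \<in> S \<Longrightarrow> f v \<in> S"
    proof -
      fix v assume v: "v \<in> S"
      have "col (f v) = col v" using fa v SV by blast
      thus "f v \<in> S" using v unfolding col_def by (auto split: if_splits)
    qed
    have fa2: "f a2 = a2" using out dist inV S_def by auto
    have fS: "f a1 \<in> S" "f b \<in> S" "f c \<in> S" "f l \<in> S" using inS S_def by auto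
    have "E a2 (f b)" "E a2 (f c)" using ad[of a2 b] ad[of a2 c] fa2 e1 inV by auto
    hence fbc: "f b \<in> {b, c}" "f c \<in> {b, c}" using fS nA e2 S_def by auto
    have fbc2: "f b \<noteq> f c" using inj inV dist by metis
    have fbc3: "{f b, f c} = {b, c}" using fbc fbc2 by auto
    have "f a1 \<noteq> f b" "f a1 \<noteq> f c" "f l \<noteq> f b" "f l \<noteq> f c" "f a1 \<noteq> f l"
      using inj[of a1 b] inj[of a1 c] inj[of l b] inj[of l c] inj[of a1 l] inV dist by auto
    hence fal: "f a1 \<in> {a1, l}" "f l \<in> {a1, l}"
      using fS fbc3 unfolding S_def by auto
    have fa1: "f a1 = a1"
    proof (rule ccontr)
      assume "f a1 \<noteq> a1"
      hence "f a1 = l" using fal by auto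
      hence "E l (f b)" "E l (f c)" using ad[of a1 b] ad[of a1 c] e1 inV by auto
      thus False using fbc fbc2 e2 by auto
    qed
    have fl: "f l = l" using fal fa1 inj[of l a1] inV dist by auto
    have "E l (f c)" using ad[of l c] fl e1 inV by auto
    hence fc: "f c = c" using fbc e2 by auto
    have fb: "f b = b" using fbc fbc2 fc by auto
    show "\<forall>v\<in>V. f v = v"
    proof
      fix v assume "v \<in> V"
      then show "f v = v" using out fa1 fb fc fl S_def by (cases "v \<in> S") auto
    qed
  qed
  have "dist_num V E \<le> card V - 3"
    unfolding dist_num_def by (rule Least_le) (use range dst in blast)
  then show ?thesis using cV by linarith
qed

end
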